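(* Let $H$ be a reduced atomic cancellative monoid, and let $\sim_H \subset \mathsf Z(H)\times\mathsf Z(H)$ be its monoid of relations. 1. $\sim_H$ is a saturated submonoid of $\mathsf Z(H)\times \mathsf Z(H)$, and $\sim_H$ is a reduced cancellative BF-monoid. 2. If $\sim_H$ satisfies the ascending chain condition on right ideals, then $\sim_H$ is finitely generated. 3. If $H$ is commutative and finitely generated, then $\sim_H$ satisfies the ascending chain condition on ideals and $\sim_H$ is finitely generated.
   Context: A monoid is an associative semigroup with identity; $H^\times$ is its group of units and $H$ is reduced if $H^\times=\{1\}$. An atom of $H$ is a non-unit $u$ such that $u=ab$ implies $a\in H^\times$ or $b\in H^\times$; $\mathcal A(H)$ is the set of atoms, and $H$ is atomic if every non-unit is a finite product of atoms. For a reduced atomic monoid $H$, the factorization monoid $\mathsf Z(H)$ is the free monoid $\mathcal F^*(\mathcal A(H))$ (words over $\mathcal A(H)$) if $H$ is non-commutative and the free abelian monoid $\mathcal F(\mathcal A(H))$ if $H$ is commutative; $\pi:\mathsf Z(H)\to H$ is the canonical epimorphism, and the length $|z|$ of $z\in\mathsf Z(H)$ is the number of atoms in $z$. The monoid of relations is $\sim_H=\{(x,y)\in\mathsf Z(H)\times\mathsf Z(H)\mid \pi(x)=\pi(y)\}$. A submonoid $S$ of a monoid $D$ is saturated if $a\in D$, $b\in S$ and ($ab\in S$ or $ba\in S$) imply $a\in S$. For an atomic monoid, $\mathsf L(a)$ denotes the set of all $k$ such that $a$ is a product of $k$ atoms (with $\mathsf L(\varepsilon)=\{0\}$ for units); a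 BF-monoid is an atomic monoid in which $\mathsf L(a)$ is finite and nonempty for all $a$. *)

theory Defs
  imports "HOL-Algebra.Group" "HOL-Library.Multiset"
begin

definition lprod :: "('a, 'b) monoid_scheme \<Rightarrow> 'a list \<Rightarrow> 'a" where
  "lprod M xs = foldr (\<lambda>x y. x \<otimes>\<^bsub>M\<^esub> y) xs \<one>\<^bsub>M\<^esub>"

definition commutative :: "('a, 'b) monoid_scheme \<Rightarrow> bool" where
  "commutative M \<longleftrightarrow> (\<forall>a\<in>carrier M. \<forall>b\<in>carrier M. a \<otimes>\<^bsub>M\<^esub> b = b \<otimes>\<^bsub>M\<^esub> a)"

definition reduced :: "('a, 'b) monoid_scheme \<Rightarrow> bool" where
  "reduced M \<longleftrightarrow> Units M = {\<one>\<^bsub>M\<^esub>}"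

definition cancellative :: "('a, 'b) monoid_scheme \<Rightarrow> bool" where
  "cancellative M \<longleftrightarrow>
     (\<forall>a\<in>carrier M. \<forall>b\<in>carrier M. \<forall>c\<in>carrier M.
        (a \<otimes>\<^bsub>M\<^esub> b = a \<otimes>\<^bsub>M\<^esub> c \<longrightarrow> b = c) \<and>
        (b \<otimes>\<^bsub>M\<^esub> a = c \<otimes>\<^bsub>M\<^esub> a \<longrightarrow> b = c))"

definition atom :: "('a, 'b) monoid_scheme \<Rightarrow> 'a \<Rightarrow> bool" where
  "atom M u \<longleftrightarrow> u \<in> carrier M \<and> u \<notin> Units M \<and>
     (\<forall>a\<in>carrier M. \<forall>b\<in>carrier M. u = a \<otimes>\<^bsub>M\<^esub> b \<longrightarrow> a \<in> Units M \<or> b \<in> Units M)"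

definition atoms :: "('a, 'b) monoid_scheme \<Rightarrow> 'a set" where
  "atoms M = {u. atom M u}"

definition atomic :: "('a, 'b) monoid_scheme \<Rightarrow> bool" where
  "atomic M \<longleftrightarrow> (\<forall>a\<in>carrier M - Units M.
     \<exists>xs. xs \<noteq> [] \<and> set xs \<subseteq> atoms M \<and> lprod M xs = a)"

definition lengths :: "('a, 'b) monoid_scheme \<Rightarrow> 'a \<Rightarrow> nat set" where
  "lengths M a = (if a \<in> Units M then {0}
     else {length xs | xs. set xs \<subseteq> atoms M \<and> lprod M xs = a})"

definition BF_monoid :: "('a, 'b) monoid_scheme \<Rightarrow> bool" where
  "BF_monoid M \<longleftrightarrow> monoid M \<and> atomic M \<and>
     (\<forall>a\<in>carrier M. finite (lengths M a) \<and> lengths M a \<noteq> {})"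

definition saturated :: "'a set \<Rightarrow> ('a, 'b) monoid_scheme \<Rightarrow> bool" where
  "saturated S D \<longleftrightarrow> submonoid S D \<and>
     (\<forall>a\<in>carrier D. \<forall>b\<in>S. (a \<otimes>\<^bsub>D\<^esub> b \<in> S \<or> b \<otimes>\<^bsub>D\<^esub> a \<in> S) \<longrightarrow> a \<in> S)"

definition right_ideal :: "('a, 'b) monoid_scheme \<Rightarrow> 'a set \<Rightarrow> bool" where
  "right_ideal M I \<longleftrightarrow> I \<subseteq> carrier M \<and> (\<forall>a\<in>I. \<forall>s\<in>carrier M. a \<otimes>\<^bsub>M\<^esub> s \<in> I)"

definition two_sided_ideal :: "('a, 'b) monoid_scheme \<Rightarrow> 'a set \<Rightarrow> bool" where
  "two_sided_ideal M I \<longleftrightarrow> I \<subseteq> carrier M \<and>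
     (\<forall>a\<in>I. \<forall>s\<in>carrier M. a \<otimes>\<^bsub>M\<^esub> s \<in> I \<and> s \<otimes>\<^bsub>M\<^esub> a \<in> I)"

definition acc_on :: "('a set \<Rightarrow> bool) \<Rightarrow> bool" where
  "acc_on P \<longleftrightarrow> (\<forall>f :: nat \<Rightarrow> 'a set. (\<forall>n. P (f n)) \<and> (\<forall>n. f n \<subseteq> f (Suc n))
      \<longrightarrow> (\<exists>N. \<forall>n\<ge>N. f n = f N))"

definition acc_right_ideals :: "('a, 'b) monoid_scheme \<Rightarrow> bool" where
  "acc_right_ideals M \<longleftrightarrow> acc_on (right_ideal M)"

definition acc_ideals :: "('a, 'b) monoid_scheme \<Rightarrow> bool" where
  "acc_ideals M \<longleftrightarrow> acc_on (two_sided_ideal M)"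

definition finitely_generated :: "('a, 'b) monoid_scheme \<Rightarrow> bool" where
  "finitely_generated M \<longleftrightarrow> (\<exists>E. finite E \<and> E \<subseteq> carrier M \<and>
     carrier M = {lprod M xs | xs. set xs \<subseteq> E})"

text \<open>Free monoid on the atoms (non-commutative case).\<close>
definition ZF :: "('a, 'b) monoid_scheme \<Rightarrow> 'a list monoid" where
  "ZF H = \<lparr>carrier = {xs. set xs \<subseteq> atoms H}, monoid.mult = (@), one = []\<rparr>"

definition piF :: "('a, 'b) monoid_scheme \<Rightarrow> 'a list \<Rightarrow> 'a" where
  "piF H xs = lprod H xs"

text \<open>Free abelian monoid on the atoms (commutative case).\<close>
definition ZA :: "('a, 'b) monoid_scheme \<Rightarrow> 'a multiset monoid" where
  "ZA H = \<lparr>carrier = {m. set_mset m \<subseteq> atoms H}, monoid.mult = (+), one = {#}\<rparr>"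

definition piA :: "('a, 'b) monoid_scheme \<Rightarrow> 'a multiset \<Rightarrow> 'a" where
  "piA H m = lprod H (SOME xs. mset xs = m)"

definition rel_monoid :: "('z, 'c) monoid_scheme \<Rightarrow> ('z \<Rightarrow> 'a) \<Rightarrow> ('z \<times> 'z) monoid" where
  "rel_monoid Z p = (Z \<times>\<times> Z)\<lparr>carrier := {z \<in> carrier Z \<times> carrier Z. p (fst z) = p (snd z)}\<rparr>"

definition RelF :: "('a, 'b) monoid_scheme \<Rightarrow> ('a list \<times> 'a list) monoid" where
  "RelF H = rel_monoid (ZF H) (piF H)"

definition RelA :: "('a, 'b) monoid_scheme \<Rightarrow> ('a multiset \<times> 'a multiset) monoid" where
  "RelA H = rel_monoid (ZA H) (piA H)"

end

theory Submission imports Defs "HOL-Library.Ramsey" begin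

lemma lprod_Nil[simp]: "lprod M [] = \<one>\<^bsub>M\<^esub>" by (simp add: lprod_def)
lemma lprod_Cons[simp]: "lprod M (x#xs) = x \<otimes>\<^bsub>M\<^esub> lprod M xs" by (simp add: lprod_def)

lemma lprod_closed: "monoid M \<Longrightarrow> set xs \<subseteq> carrier M \<Longrightarrow> lprod M xs \<in> carrier M"
  by (induction xs) (auto simp: monoid.m_closed monoid.one_closed)

lemma lprod_append: "monoid M \<Longrightarrow> set xs \<subseteq> carrier M \<Longrightarrow> set ys \<subseteq> carrier M \<Longrightarrow>
   lprod M (xs @ ys) = lprod M xs \<otimes>\<^bsub>M\<^esub> lprod M ys"
  by (induction xs) (auto simp: monoid.m_assoc monoid.l_one lprod_closed)

lemma DP_mult: "x \<otimes>\<^bsub>G \<times>\<times> K\<^esub> y = (fst x \<otimes>\<^bsub>G\<^esub> fst y, snd x \<otimes>\<^bsub>K\<^esub> snd y)"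
  by (simp add: DirProd_def split: prod.split)
lemma DP_carrier: "carrier (G \<times>\<times> K) = carrier G \<times> carrier K"
  by (simp add: DirProd_def)
lemma DP_one: "\<one>\<^bsub>G \<times>\<times> K\<^esub> = (\<one>\<^bsub>G\<^esub>, \<one>\<^bsub>K\<^esub>)"
  by (simp add: DirProd_def)

lemma RM_carrier: "carrier (rel_monoid Z p) = {z \<in> carrier Z \<times> carrier Z. p (fst z) = p (snd z)}"
  by (simp add: rel_monoid_def)
lemma RM_mult: "x \<otimes>\<^bsub>rel_monoid Z p\<^esub> y = (fst x \<otimes>\<^bsub>Z\<^esub> fst y, snd x \<otimes>\<^bsub>Z\<^esub> snd y)"
  by (simp add: rel_monoid_def DP_mult)
lemma RM_one: "\<one>\<^bsub>rel_monoid Z p\<^esub> = (\<one>\<^bsub>Z\<^esub>, \<one>\<^bsub>Z\<^esub>)"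
  by (simp add: rel_monoid_def DP_one)

lemma length_le_sum: "(\<forall>x\<in>set xs. 1 \<le> f x) \<Longrightarrow> length xs \<le> sum_list (map f xs)"
  by (induction xs) auto

lemma rel_generic:
  fixes Z :: "('z,'c) monoid_scheme" and H :: "('a,'b) monoid_scheme" and p :: "'z \<Rightarrow> 'a" and l :: "'z \<Rightarrow> nat"
  assumes mZ: "monoid Z" and mH: "monoid H" and cH: "cancellative H" and cZ: "cancellative Z"
  and pc: "\<And>a. a \<in> carrier Z \<Longrightarrow> p a \<in> carrier H"
  and pm: "\<And>a b. a \<in> carrier Z \<Longrightarrow> b \<in> carrier Z \<Longrightarrow> p (a \<otimes>\<^bsub>Z\<^esub> b) = p a \<otimes>\<^bsub>H\<^esub> p b"
  and lm: "\<And>a b. a \<in> carrier Z \<Longrightarrow> b \<in> carrier Z \<Longrightarrow> l (a \<otimes>\<^bsub>Z\<^esub> b) = l a + l b"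
  and l0: "\<And>a. a \<in> carrier Z \<Longrightarrow> l a = 0 \<Longrightarrow> a = \<one>\<^bsub>Z\<^esub>"
  shows "saturated (carrier (rel_monoid Z p)) (Z \<times>\<times> Z) \<and> reduced (rel_monoid Z p) \<and>
         cancellative (rel_monoid Z p) \<and> BF_monoid (rel_monoid Z p)"
proof -
  interpret Z: monoid Z by (rule mZ)
  interpret H: monoid H by (rule mH)
  define R where "R = rel_monoid Z p"
  have cR: "carrier R = {z \<in> carrier Z \<times> carrier Z. p (fst z) = p (snd z)}"
    unfolding R_def by (rule RM_carrier)
  have mR: "\<And>x y. x \<otimes>\<^bsub>R\<^esub> y = (fst x \<otimes>\<^bsub>Z\<^esub> fst y, snd x \<otimes>\<^bsub>Z\<^esub> snd y)"
    unfolding R_def by (rule RM_mult)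
  have oR: "\<one>\<^bsub>R\<^esub> = (\<one>\<^bsub>Z\<^esub>, \<one>\<^bsub>Z\<^esub>)"
    unfolding R_def by (rule RM_one)
  have mon: "monoid R"
    by (rule monoidI) (auto simp: cR mR oR pm Z.m_assoc)
  interpret R: monoid R by (rule mon)
  have l1: "l \<one>\<^bsub>Z\<^esub> = 0" using lm[of "\<one>\<^bsub>Z\<^esub>" "\<one>\<^bsub>Z\<^esub>"] by simp
  define N where "N z = l (fst z) + l (snd z)" for z
  have NR: "\<And>x y. x \<in> carrier R \<Longrightarrow> y \<in> carrier R \<Longrightarrow> N (x \<otimes>\<^bsub>R\<^esub> y) = N x + N y"
    by (auto simp: N_def mR cR lm)
  have N0: "\<And>x. x \<in> carrier R \<Longrightarrow> N x = 0 \<Longrightarrow> x = \<one>\<^bsub>R\<^esub>"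
    by (auto simp: N_def cR oR l0 prod_eq_iff)
  have N1: "N \<one>\<^bsub>R\<^esub> = 0" by (simp add: N_def oR l1)
  have UR: "Units R = {\<one>\<^bsub>R\<^esub>}"
  proof
    show "{\<one>\<^bsub>R\<^esub>} \<subseteq> Units R" by simp
    show "Units R \<subseteq> {\<one>\<^bsub>R\<^esub>}"
    proof
      fix y assume "y \<in> Units R"
      then obtain x where x: "x \<in> carrier R" "y \<in> carrier R" "x \<otimes>\<^bsub>R\<^esub> y = \<one>\<^bsub>R\<^esub>"
        unfolding Units_def by blast
      then have "N x + N y = 0" using NR[of x y] N1 by simp
      then have "N y = 0" by simp
      then show "y \<in> {\<one>\<^bsub>R\<^esub>}" using N0[OF x(2)] by simp
    qed
  qed
  have Npos: "\<And>x. x \<in> carrier R \<Longrightarrow> x \<notin> Units R \<Longrightarrow> 1 \<le> N x"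
    using N0 UR by fastforce
  have atC: "atoms R \<subseteq> carrier R" by (auto simp: atoms_def atom_def)
  have NL: "set xs \<subseteq> carrier R \<Longrightarrow> N (lprod R xs) = sum_list (map N xs)" for xs
    by (induction xs) (auto simp: N1 NR lprod_closed[OF mon])
  have atomic: "atomic R"
    unfolding atomic_def
  proof
    fix a assume "a \<in> carrier R - Units R"
    then show "\<exists>xs. xs \<noteq> [] \<and> set xs \<subseteq> atoms R \<and> lprod R xs = a"
    proof (induction "N a" arbitrary: a rule: less_induct)
      case less
      show ?case
      proof (cases "atom R a")
        case True
        then show ?thesis using less.prems by (intro exI[of _ "[a]"]) (auto simp: atoms_def)
      next
        case False
        then obtain b c where bc: "b \<in> carrier R" "c \<in> carrier R" "a = b \<otimes>\<^bsub>R\<^esub> c"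
          "b \<notin> Units R" "c \<notin> Units R"
          using less.prems unfolding atom_def by blast
        have "N a = N b + N c" using bc NR by simp
        moreover have "1 \<le> N b" "1 \<le> N c" using Npos bc by auto
        ultimately have "N b < N a" "N c < N a" by auto
        then obtain xs ys where "xs \<noteq> []" "set xs \<subseteq> atoms R" "lprod R xs = b"
          "set ys \<subseteq> atoms R" "lprod R ys = c"
          using less.hyps bc by blast
        then show ?thesis using bc atC
          by (intro exI[of _ "xs @ ys"]) (auto simp: lprod_append[OF mon])
      qed
    qed
  qed
  have BF0: "\<forall>a\<in>carrier R. finite (lengths R a) \<and> lengths R a \<noteq> {}"
  proof
    fix a assume a: "a \<in> carrier R"
    show "finite (lengths R a) \<and> lengths R a \<noteq> {}"
    proof (cases "a \<in> Units R")
      case True then show ?thesis by (simp add: lengths_def)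
    next
      case False
      have "lengths R a \<subseteq> {..N a}"
      proof
        fix k assume "k \<in> lengths R a"
        then obtain xs where xs: "k = length xs" "set xs \<subseteq> atoms R" "lprod R xs = a"
          using False by (auto simp: lengths_def)
        have "\<forall>x\<in>set xs. 1 \<le> N x" using xs atC Npos by (auto simp: atoms_def atom_def)
        then have "length xs \<le> sum_list (map N xs)" by (rule length_le_sum)
        also have "\<dots> = N a" using NL[of xs] xs atC by simp
        finally show "k \<in> {..N a}" using xs by simp
      qed
      then have "finite (lengths R a)" by (rule finite_subset) simp
      moreover obtain xs where "set xs \<subseteq> atoms R" "lprod R xs = a"
        using atomic a False unfolding atomic_def by blast
      then have "length xs \<in> lengths R a" using False by (auto simp: lengths_def)
      ultimately show ?thesis by blast
    qed
  qed
  have BF: "BF_monoid R" using BF0 mon atomic by (simp add: BF_monoid_def)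
  have canc: "cancellative R"
    using cZ unfolding cancellative_def by (auto simp: cR mR prod_eq_iff)
  have sat: "saturated (carrier R) (Z \<times>\<times> Z)"
    unfolding saturated_def
  proof
    show "submonoid (carrier R) (Z \<times>\<times> Z)"
      by (unfold_locales) (auto simp: cR DP_carrier DP_mult DP_one pm)
    show "\<forall>a\<in>carrier (Z \<times>\<times> Z). \<forall>b\<in>carrier R.
          a \<otimes>\<^bsub>Z \<times>\<times> Z\<^esub> b \<in> carrier R \<or> b \<otimes>\<^bsub>Z \<times>\<times> Z\<^esub> a \<in> carrier R \<longrightarrow> a \<in> carrier R"
    proof (intro ballI impI)
      fix a b assume a: "a \<in> carrier (Z \<times>\<times> Z)" and b: "b \<in> carrier R"
        and ab: "a \<otimes>\<^bsub>Z \<times>\<times> Z\<^esub> b \<in> carrier R \<or> b \<otimes>\<^bsub>Z \<times>\<times> Z\<^esub> a \<in> carrier R"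
      have a1: "fst a \<in> carrier Z" "snd a \<in> carrier Z" using a by (auto simp: DP_carrier)
      have b1: "fst b \<in> carrier Z" "snd b \<in> carrier Z" "p (fst b) = p (snd b)" using b by (auto simp: cR)
      have "p (fst a) = p (snd a)"
        using ab
      proof
        assume "a \<otimes>\<^bsub>Z \<times>\<times> Z\<^esub> b \<in> carrier R"
        then have "p (fst a) \<otimes>\<^bsub>H\<^esub> p (fst b) = p (snd a) \<otimes>\<^bsub>H\<^esub> p (fst b)"
          using a1 b1 by (auto simp: cR DP_mult pm)
        then show ?thesis using cH a1 b1 pc unfolding cancellative_def by blast
      next
        assume "b \<otimes>\<^bsub>Z \<times>\<times> Z\<^esub> a \<in> carrier R"
        then have "p (fst b) \<otimes>\<^bsub>H\<^esub> p (fst a) = p (fst b) \<otimes>\<^bsub>H\<^esub> p (snd a)"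
          using a1 b1 by (auto simp: cR DP_mult pm)
        then show ?thesis using cH a1 b1 pc unfolding cancellative_def by blast
      qed
      then show "a \<in> carrier R" using a by (auto simp: cR DP_carrier)
    qed
  qed
  show ?thesis using sat UR canc BF unfolding R_def reduced_def by simp
qed


lemma atoms_carrier: "atoms H \<subseteq> carrier H" by (auto simp: atoms_def atom_def)

lemma ZF_monoid: "monoid (ZF H)"
  by (rule monoidI) (auto simp: ZF_def)
lemma ZF_canc: "cancellative (ZF H)"
  by (auto simp: ZF_def cancellative_def)
lemma ZA_monoid: "monoid (ZA H)"
  by (rule monoidI) (auto simp: ZA_def)
lemma ZA_canc: "cancellative (ZA H)"
  by (auto simp: ZA_def cancellative_def)

lemma RelF_props:
  assumes "monoid H" "cancellative H"
  shows "saturated (carrier (RelF H)) (ZF H \<times>\<times> ZF H) \<and> reduced (RelF H) \<and>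
         cancellative (RelF H) \<and> BF_monoid (RelF H)"
  unfolding RelF_def
proof (rule rel_generic[OF ZF_monoid assms(1,2) ZF_canc, where l = length])
  fix a b assume a: "a \<in> carrier (ZF H)" and b: "b \<in> carrier (ZF H)"
  have "set a \<subseteq> carrier H" "set b \<subseteq> carrier H" using a b atoms_carrier[of H] by (auto simp: ZF_def)
  then show "piF H (a \<otimes>\<^bsub>ZF H\<^esub> b) = piF H a \<otimes>\<^bsub>H\<^esub> piF H b"
    by (simp add: ZF_def piF_def lprod_append[OF assms(1)])
  show "length (a \<otimes>\<^bsub>ZF H\<^esub> b) = length a + length b" by (simp add: ZF_def)
next
  fix a assume a: "a \<in> carrier (ZF H)"
  then show "piF H a \<in> carrier H" using atoms_carrier[of H]
    by (auto simp: ZF_def piF_def intro!: lprod_closed[OF assms(1)])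
  show "length a = 0 \<Longrightarrow> a = \<one>\<^bsub>ZF H\<^esub>" by (simp add: ZF_def)
qed

lemma lprod_perm:
  assumes "monoid H" "commutative H"
  shows "set xs \<subseteq> carrier H \<Longrightarrow> mset xs = mset ys \<Longrightarrow> lprod H xs = lprod H ys"
proof (induction xs arbitrary: ys)
  case Nil then show ?case by simp
next
  case (Cons x xs)
  interpret H: monoid H by fact
  have "x \<in> set ys" using Cons.prems by (metis list.set_intros(1) set_mset_mset)
  then obtain ys1 ys2 where ys: "ys = ys1 @ x # ys2" by (meson split_list)
  have sy: "set ys \<subseteq> carrier H" using Cons.prems by (metis set_mset_mset)
  have "mset xs = mset (ys1 @ ys2)" using Cons.prems ys by simp
  then have "lprod H xs = lprod H (ys1 @ ys2)" using Cons by simp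
  then have "lprod H (x # xs) = x \<otimes>\<^bsub>H\<^esub> (lprod H ys1 \<otimes>\<^bsub>H\<^esub> lprod H ys2)"
    using sy ys by (simp add: lprod_append[OF assms(1)])
  also have "\<dots> = lprod H ys1 \<otimes>\<^bsub>H\<^esub> (x \<otimes>\<^bsub>H\<^esub> lprod H ys2)"
  proof -
    have c1: "lprod H ys1 \<in> carrier H" "lprod H ys2 \<in> carrier H" "x \<in> carrier H"
      using sy ys by (auto intro!: lprod_closed[OF assms(1)])
    have "x \<otimes>\<^bsub>H\<^esub> lprod H ys1 = lprod H ys1 \<otimes>\<^bsub>H\<^esub> x"
      using assms(2) c1 unfolding commutative_def by blast
    then show ?thesis using c1 by (metis H.m_assoc)
  qed
  also have "\<dots> = lprod H ys"
    using sy ys by (simp add: lprod_append[OF assms(1)])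
  finally show ?case .
qed

lemma piA_eq:
  assumes "monoid H" "commutative H" "set_mset m \<subseteq> carrier H" "mset xs = m"
  shows "piA H m = lprod H xs"
proof -
  have e: "mset (SOME xs. mset xs = m) = m" by (rule someI_ex) (rule ex_mset)
  have "set (SOME xs. mset xs = m) \<subseteq> carrier H" using e assms(3) by (metis set_mset_mset)
  then show ?thesis unfolding piA_def
    by (rule lprod_perm[OF assms(1,2)]) (simp add: e assms(4))
qed

lemma RelA_props:
  assumes "monoid H" "cancellative H" "commutative H"
  shows "saturated (carrier (RelA H)) (ZA H \<times>\<times> ZA H) \<and> reduced (RelA H) \<and>
         cancellative (RelA H) \<and> BF_monoid (RelA H)"
  unfolding RelA_def
proof (rule rel_generic[OF ZA_monoid assms(1,2) ZA_canc, where l = size])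
  fix a b assume a: "a \<in> carrier (ZA H)" and b: "b \<in> carrier (ZA H)"
  have ab: "set_mset a \<subseteq> carrier H" "set_mset b \<subseteq> carrier H" using a b atoms_carrier[of H] by (auto simp: ZA_def)
  obtain xs ys where xs: "mset xs = a" "mset ys = b" using ex_mset by metis
  have "piA H (a + b) = lprod H (xs @ ys)"
    by (rule piA_eq[OF assms(1,3)]) (use ab xs in auto)
  also have "\<dots> = lprod H xs \<otimes>\<^bsub>H\<^esub> lprod H ys"
    using ab xs by (intro lprod_append[OF assms(1)]) auto
  also have "\<dots> = piA H a \<otimes>\<^bsub>H\<^esub> piA H b"
    using piA_eq[OF assms(1,3)] ab xs by simp
  finally show "piA H (a \<otimes>\<^bsub>ZA H\<^esub> b) = piA H a \<otimes>\<^bsub>H\<^esub> piA H b" by (simp add: ZA_def)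
  show "size (a \<otimes>\<^bsub>ZA H\<^esub> b) = size a + size b" by (simp add: ZA_def)
next
  fix a assume a: "a \<in> carrier (ZA H)"
  have ab: "set_mset a \<subseteq> carrier H" using a atoms_carrier[of H] by (auto simp: ZA_def)
  obtain xs where xs: "mset xs = a" using ex_mset by metis
  then show "piA H a \<in> carrier H" using piA_eq[OF assms(1,3) ab xs] ab
    by (auto intro!: lprod_closed[OF assms(1)])
  show "size a = 0 \<Longrightarrow> a = \<one>\<^bsub>ZA H\<^esub>" by (simp add: ZA_def)
qed


lemma acc_fg:
  assumes mM: "monoid M" and rM: "reduced M" and aM: "atomic M" and acc: "acc_right_ideals M"
  shows "finitely_generated M"
proof -
  interpret M: monoid M by (rule mM)
  have U: "Units M = {\<one>\<^bsub>M\<^esub>}" using rM by (simp add: reduced_def)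
  have fin: "finite (atoms M)"
  proof (rule ccontr)
    assume "infinite (atoms M)"
    then obtain u :: "nat \<Rightarrow> _" where u: "inj u" "range u \<subseteq> atoms M"
      using infinite_countable_subset by blast
    have uat: "atom M (u i)" for i using u by (auto simp: atoms_def)
    then have uc: "u i \<in> carrier M" for i by (simp add: atom_def)
    define f where "f n = {u i \<otimes>\<^bsub>M\<^esub> s | i s. i < n \<and> s \<in> carrier M}" for n
    have ri: "right_ideal M (f n)" for n
      unfolding right_ideal_def f_def
      by (auto simp: uc M.m_assoc) (metis M.m_closed)
    have mono: "f n \<subseteq> f (Suc n)" for n
      unfolding f_def by (auto intro: less_SucI)
    obtain N where N: "\<forall>n\<ge>N. f n = f N"
      using acc unfolding acc_right_ideals_def acc_on_def using ri mono by blast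
    have "u N = u N \<otimes>\<^bsub>M\<^esub> \<one>\<^bsub>M\<^esub>" using uc by simp
    then have "u N \<in> f (Suc N)" unfolding f_def by blast
    moreover have "f (Suc N) = f N" using spec[OF N, of "Suc N"] by simp
    ultimately have "u N \<in> f N" by simp
    then obtain i s where iS: "i < N" "s \<in> carrier M" "u N = u i \<otimes>\<^bsub>M\<^esub> s"
      unfolding f_def by blast
    then have "u i \<in> Units M \<or> s \<in> Units M" using uat[of N] uc unfolding atom_def by blast
    moreover have "u i \<notin> Units M" using uat[of i] by (simp add: atom_def)
    ultimately have "s = \<one>\<^bsub>M\<^esub>" using U by blast
    then have "u N = u i" using iS uc by simp
    then have "N = i" using u(1) by (simp add: inj_eq)
    then show False using iS(1) by simp
  qed
  have "carrier M = {lprod M xs | xs. set xs \<subseteq> atoms M}"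
  proof
    show "carrier M \<subseteq> {lprod M xs | xs. set xs \<subseteq> atoms M}"
    proof
      fix a assume a: "a \<in> carrier M"
      show "a \<in> {lprod M xs | xs. set xs \<subseteq> atoms M}"
      proof (cases "a \<in> Units M")
        case True then have "a = lprod M []" using U by simp
        moreover have "set [] \<subseteq> atoms M" by simp
        ultimately show ?thesis by blast
      next
        case False then obtain xs where "set xs \<subseteq> atoms M" "lprod M xs = a"
          using aM a unfolding atomic_def by blast
        then show ?thesis by (metis (mono_tags, lifting) mem_Collect_eq)
      qed
    qed
    show "{lprod M xs | xs. set xs \<subseteq> atoms M} \<subseteq> carrier M"
      using atoms_carrier[of M] by (auto intro!: lprod_closed[OF mM])
  qed
  then show ?thesis unfolding finitely_generated_def using fin atoms_carrier[of M] by blast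
qed

lemma comm_acc:
  assumes "commutative M" "acc_ideals M" shows "acc_right_ideals M"
proof -
  have "right_ideal M I \<Longrightarrow> two_sided_ideal M I" for I
    using assms(1) unfolding right_ideal_def two_sided_ideal_def commutative_def by (metis subsetD)
  then show ?thesis using assms(2) unfolding acc_right_ideals_def acc_ideals_def acc_on_def by metis
qed

lemma RelA_comm: "commutative (RelA H)"
  by (auto simp: commutative_def RelA_def RM_mult ZA_def add.commute)

lemma fg_atoms:
  assumes mH: "monoid H" and rH: "reduced H" and fg: "finitely_generated H"
  shows "finite (atoms H)"
proof -
  interpret H: monoid H by (rule mH)
  have U: "Units H = {\<one>\<^bsub>H\<^esub>}" using rH by (simp add: reduced_def)
  obtain E where E: "finite E" "E \<subseteq> carrier H" "carrier H = {lprod H xs | xs. set xs \<subseteq> E}"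
    using fg unfolding finitely_generated_def by blast
  have key: "set xs \<subseteq> E \<Longrightarrow> atom H u \<Longrightarrow> u = lprod H xs \<Longrightarrow> u \<in> E" for xs u
  proof (induction xs arbitrary: u)
    case Nil then show ?case by (simp add: atom_def)
  next
    case (Cons x xs)
    have c: "x \<in> carrier H" "lprod H xs \<in> carrier H"
      using Cons.prems E(2) by (auto intro!: lprod_closed[OF mH])
    then have "x \<in> Units H \<or> lprod H xs \<in> Units H" using Cons.prems unfolding atom_def by auto
    then show ?case
    proof
      assume "x \<in> Units H" then have "x = \<one>\<^bsub>H\<^esub>" using U by blast
      then show ?thesis using Cons c by simp
    next
      assume "lprod H xs \<in> Units H" then have "lprod H xs = \<one>\<^bsub>H\<^esub>" using U by blast
      then show ?thesis using Cons c by simp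
    qed
  qed
  have "atoms H \<subseteq> E"
  proof
    fix u assume "u \<in> atoms H"
    then have u: "atom H u" "u \<in> carrier H" by (auto simp: atoms_def atom_def)
    then obtain xs where "set xs \<subseteq> E" "u = lprod H xs" using E(3) by blast
    then show "u \<in> E" using key u by blast
  qed
  then show ?thesis using E(1) finite_subset by blast
qed

lemma no_desc:
  fixes Y :: "nat set" and \<phi> :: "nat \<Rightarrow> nat"
  assumes "infinite Y" "\<And>i j. i \<in> Y \<Longrightarrow> j \<in> Y \<Longrightarrow> i < j \<Longrightarrow> \<phi> j < \<phi> i"
  shows False
proof -
  obtain y0 where "y0 \<in> Y" using assms(1) by (metis finite.emptyI ex_in_conv)
  then obtain y where y: "y \<in> Y" "\<forall>z. z \<in> Y \<longrightarrow> \<phi> y \<le> \<phi> z"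
    using ex_has_least_nat[of "\<lambda>z. z \<in> Y" y0 \<phi>] by blast
  obtain y' where "y' \<in> Y" "y < y'" using assms(1) unfolding infinite_nat_iff_unbounded by blast
  then show False using assms(2)[of y y'] y by fastforce
qed

lemma dickson2:
  fixes g :: "nat \<Rightarrow> 'a multiset \<times> 'a multiset"
  assumes A: "finite A" and gA: "\<And>n. set_mset (fst (g n)) \<subseteq> A" "\<And>n. set_mset (snd (g n)) \<subseteq> A"
  shows "\<exists>i j. i < j \<and> fst (g i) \<subseteq># fst (g j) \<and> snd (g i) \<subseteq># snd (g j)"
proof -
  define col where "col i j = ({x\<in>A. count (fst (g j)) x < count (fst (g i)) x},
                               {x\<in>A. count (snd (g j)) x < count (snd (g i)) x})" for i j
  define C where "C = Pow A \<times> Pow A"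
  have fC: "finite C" using A by (simp add: C_def)
  obtain h where h: "bij_betw h C {0..<card C}" using ex_bij_betw_finite_nat[OF fC] by blast
  have colC: "col i j \<in> C" for i j by (auto simp: col_def C_def)
  define f where "f X = h (col (Min X) (Max X))" for X
  have "\<forall>X. X \<subseteq> UNIV \<and> finite X \<and> card X = 2 \<longrightarrow> f X < card C"
    using h colC unfolding f_def bij_betw_def by auto
  then obtain Y t where Y: "Y \<subseteq> UNIV" "infinite Y" "t < card C"
    "\<forall>X. X \<subseteq> Y \<and> finite X \<and> card X = 2 \<longrightarrow> f X = t"
    using Ramsey[of "UNIV :: nat set" 2 f "card C"] by blast
  have hom: "h (col i j) = t" if "i \<in> Y" "j \<in> Y" "i < j" for i j
  proof -
    have "{i, j} \<subseteq> Y \<and> finite {i,j} \<and> card {i,j} = 2" using that by auto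
    then have "f {i,j} = t" using Y(4) by blast
    moreover have "Min {i,j} = i" "Max {i,j} = j" using that by auto
    ultimately show ?thesis by (simp add: f_def)
  qed
  obtain i0 where i0: "i0 \<in> Y" using Y(2) by (metis finite.emptyI ex_in_conv)
  obtain j0 where j0: "j0 \<in> Y" "i0 < j0" using Y(2) unfolding infinite_nat_iff_unbounded by blast
  define c where "c = col i0 j0"
  have colc: "col i j = c" if "i \<in> Y" "j \<in> Y" "i < j" for i j
  proof -
    have "h (col i j) = h c" using hom that i0 j0 by (simp add: c_def)
    then show ?thesis using h colC unfolding bij_betw_def inj_on_def c_def by blast
  qed
  show ?thesis
  proof (cases "c = ({}, {})")
    case True
    then have e: "col i0 j0 = ({}, {})" by (simp add: c_def)
    have "count (fst (g i0)) x \<le> count (fst (g j0)) x" for x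
    proof (cases "x \<in> A")
      case True then show ?thesis using e unfolding col_def by (auto simp: set_eq_iff not_less)
    next
      case False then have "x \<notin># fst (g i0)" using gA by blast
      then show ?thesis by (simp add: not_in_iff)
    qed
    moreover have "count (snd (g i0)) x \<le> count (snd (g j0)) x" for x
    proof (cases "x \<in> A")
      case True then show ?thesis using e unfolding col_def by (auto simp: set_eq_iff not_less)
    next
      case False then have "x \<notin># snd (g i0)" using gA by blast
      then show ?thesis by (simp add: not_in_iff)
    qed
    ultimately show ?thesis using j0 by (auto simp: subseteq_mset_def)
  next
    case False
    then obtain x where "x \<in> fst c \<or> x \<in> snd c" by (metis equals0I prod.collapse)
    then show ?thesis
    proof
      assume x: "x \<in> fst c"
      have "count (fst (g j)) x < count (fst (g i)) x" if "i \<in> Y" "j \<in> Y" "i < j" for i j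
        using colc[OF that] x by (auto simp: col_def)
      then have False using no_desc[OF Y(2), of "\<lambda>i. count (fst (g i)) x"] by blast
      then show ?thesis ..
    next
      assume x: "x \<in> snd c"
      have "count (snd (g j)) x < count (snd (g i)) x" if "i \<in> Y" "j \<in> Y" "i < j" for i j
        using colc[OF that] x by (auto simp: col_def)
      then have False using no_desc[OF Y(2), of "\<lambda>i. count (snd (g i)) x"] by blast
      then show ?thesis ..
    qed
  qed
qed


lemma RelA_acc:
  assumes mH: "monoid H" and cH: "cancellative H" and comm: "commutative H" and fin: "finite (atoms H)"
  shows "acc_ideals (RelA H)"
  unfolding acc_ideals_def acc_on_def
proof (intro allI impI)
  define R where "R = RelA H"
  fix f :: "nat \<Rightarrow> ('a multiset \<times> 'a multiset) set"
  assume f: "(\<forall>n. two_sided_ideal (RelA H) (f n)) \<and> (\<forall>n. f n \<subseteq> f (Suc n))"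
  have sat: "saturated (carrier R) (ZA H \<times>\<times> ZA H)"
    using RelA_props[OF mH cH comm] by (simp add: R_def)
  have cR: "carrier R = {z \<in> carrier (ZA H) \<times> carrier (ZA H). piA H (fst z) = piA H (snd z)}"
    by (simp add: R_def RelA_def RM_carrier)
  have mR: "\<And>x y. x \<otimes>\<^bsub>R\<^esub> y = (fst x + fst y, snd x + snd y)"
    by (simp add: R_def RelA_def RM_mult ZA_def)
  have id: "two_sided_ideal R (f n)" for n using f by (simp add: R_def)
  have mono: "m \<le> n \<Longrightarrow> f m \<subseteq> f n" for m n
    using lift_Suc_mono_le[of f m n] f by blast
  show "\<exists>N. \<forall>n\<ge>N. f n = f N"
  proof (rule ccontr)
    assume nst: "\<not> (\<exists>N. \<forall>n\<ge>N. f n = f N)"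
    have "\<forall>N. \<exists>n. f n - f N \<noteq> {} \<and> N \<le> n"
    proof
      fix N
      obtain n where "n \<ge> N" "f n \<noteq> f N" using nst by blast
      then show "\<exists>n. f n - f N \<noteq> {} \<and> N \<le> n" using mono[of N n] by blast
    qed
    then obtain nxt where nxt: "\<And>N. f (nxt N) - f N \<noteq> {}" "\<And>N. N \<le> nxt N" by metis
    define el where "el N = (SOME a. a \<in> f (nxt N) - f N)" for N
    have el: "el N \<in> f (nxt N) - f N" for N
      unfolding el_def using nxt(1)[of N] by (metis ex_in_conv someI_ex)
    define idx where "idx k = (nxt ^^ k) 0" for k
    have idxS: "idx (Suc k) = nxt (idx k)" for k by (simp add: idx_def)
    have idx_mono: "m \<le> n \<Longrightarrow> idx m \<le> idx n" for m n
      using lift_Suc_mono_le[of idx m n] idxS nxt(2) by metis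
    define g where "g k = el (idx k)" for k
    have g_in: "g k \<in> f (idx (Suc k))" "g k \<notin> f (idx k)" for k
      using el[of "idx k"] by (auto simp: g_def idxS)
    have gC: "g k \<in> carrier R" for k
      using g_in(1)[of k] id[of "idx (Suc k)"] unfolding two_sided_ideal_def by blast
    have gA: "set_mset (fst (g k)) \<subseteq> atoms H" "set_mset (snd (g k)) \<subseteq> atoms H" for k
      using gC[of k] by (auto simp: cR ZA_def)
    obtain i j where ij: "i < j" "fst (g i) \<subseteq># fst (g j)" "snd (g i) \<subseteq># snd (g j)"
      using dickson2[OF fin gA] by blast
    define c where "c = (fst (g j) - fst (g i), snd (g j) - snd (g i))"
    have cZ: "c \<in> carrier (ZA H \<times>\<times> ZA H)"
      using gA[of j] by (auto simp: c_def DP_carrier ZA_def dest: in_diffD)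
    have gc: "g i \<otimes>\<^bsub>ZA H \<times>\<times> ZA H\<^esub> c = g j"
      using ij by (simp add: c_def DP_mult ZA_def subset_mset.add_diff_inverse)
    then have "c \<in> carrier R" using sat cZ gC[of i] gC[of j] unfolding saturated_def by metis
    moreover have "g i \<in> f (idx j)"
      using g_in(1)[of i] mono[OF idx_mono[of "Suc i" j]] ij(1) by auto
    ultimately have "g i \<otimes>\<^bsub>R\<^esub> c \<in> f (idx j)" using id[of "idx j"] unfolding two_sided_ideal_def by blast
    moreover have "g i \<otimes>\<^bsub>R\<^esub> c = g j" using gc by (simp add: mR DP_mult ZA_def)
    ultimately show False using g_in(2)[of j] by simp
  qed
qed

theorem lemma3p3:
  fixes H :: "('a, 'b) monoid_scheme"
  assumes "monoid H" and "reduced H" and "atomic H" and "cancellative H"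
  shows
    "(\<not> commutative H \<longrightarrow>
        saturated (carrier (RelF H)) (ZF H \<times>\<times> ZF H) \<and>
        reduced (RelF H) \<and> cancellative (RelF H) \<and> BF_monoid (RelF H) \<and>
        (acc_right_ideals (RelF H) \<longrightarrow> finitely_generated (RelF H)))
   \<and> (commutative H \<longrightarrow>
        saturated (carrier (RelA H)) (ZA H \<times>\<times> ZA H) \<and>
        reduced (RelA H) \<and> cancellative (RelA H) \<and> BF_monoid (RelA H) \<and>
        (acc_right_ideals (RelA H) \<longrightarrow> finitely_generated (RelA H)) \<and>
        (finitely_generated H \<longrightarrow> acc_ideals (RelA H) \<and> finitely_generated (RelA H)))"
proof (intro conjI impI)
  have F: "saturated (carrier (RelF H)) (ZF H \<times>\<times> ZF H) \<and> reduced (RelF H) \<and>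
         cancellative (RelF H) \<and> BF_monoid (RelF H)" using RelF_props[OF assms(1,4)] .
  then show "saturated (carrier (RelF H)) (ZF H \<times>\<times> ZF H)" "reduced (RelF H)"
    "cancellative (RelF H)" "BF_monoid (RelF H)" by auto
  show "acc_right_ideals (RelF H) \<Longrightarrow> finitely_generated (RelF H)"
    using F acc_fg unfolding BF_monoid_def by blast
next
  assume comm: "commutative H"
  have F: "saturated (carrier (RelA H)) (ZA H \<times>\<times> ZA H) \<and> reduced (RelA H) \<and>
         cancellative (RelA H) \<and> BF_monoid (RelA H)" using RelA_props[OF assms(1,4) comm] .
  then show "saturated (carrier (RelA H)) (ZA H \<times>\<times> ZA H)" "reduced (RelA H)"
    "cancellative (RelA H)" "BF_monoid (RelA H)" by auto
  show fgA: "acc_right_ideals (RelA H) \<Longrightarrow> finitely_generated (RelA H)"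
    using F acc_fg unfolding BF_monoid_def by blast
  assume fg: "finitely_generated H"
  show acc: "acc_ideals (RelA H)"
    using RelA_acc[OF assms(1,4) comm fg_atoms[OF assms(1,2) fg]] .
  show "finitely_generated (RelA H)"
    using fgA comm_acc[OF RelA_comm acc] by blast
qed

end
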